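(* Let $\mathcal{H}_W,\mathcal{H}_A,\mathcal{H}_Y$ be finite-dimensional Hilbert spaces, let $|\phi\rangle\in\mathcal{H}_A$ be a unit vector, and let $\mathcal{S}_3:\mathrm{CPTP}(\mathcal{H}_W\otimes\mathcal{H}_A,\mathcal{H}_Y)\to\mathrm{CPTP}(\mathcal{H}_W,\mathcal{H}_Y)$ be the supermap $\mathcal{S}_3(\mathcal{N})(\rho)=\mathcal{N}(\rho\otimes|\phi\rangle\langle\phi|)$. Define the maps on operators on $\mathcal{H}_A$: $\mathcal{J}_1(\sigma)=|\phi\rangle\langle\phi|\sigma|\phi\rangle\langle\phi|$ and $\mathcal{J}_0(\sigma)=(\mathbb{1}_A-|\phi\rangle\langle\phi|)\sigma(\mathbb{1}_A-|\phi\rangle\langle\phi|)$, and let $\mathcal{J}=\mathcal{J}_1+\mathcal{J}_0$. Let $\Gamma\in\mathrm{CPTP}(\mathcal{H}_W\otimes\mathcal{H}_A,\mathcal{H}_Y)$ and let $\tau$ be a fixed density operator on $\mathcal{H}_W$. Define, for $\mathcal{M}\in\mathrm{CPTP}(\mathcal{H}_W,\mathcal{H}_Y)$, $$\mathcal{R}(\mathcal{M}):=\mathcal{M}\otimes(\mathrm{Tr}_A\circ\mathcal{J}_1)+\mathrm{Tr}[\mathcal{M}(\tau)]\,\Gamma\circ(\mathcal{I}_W\otimes\mathcal{J}_0),$$ i.e. $\mathcal{R}(\mathcal{M})(\rho_W\otimes\sigma_A)=\mathrm{Tr}[\mathcal{J}_1(\sigma_A)]\,\mathcal{M}(\rho_W)+\mathrm{Tr}[\mathcal{M}(\tau)]\,\Gamma(\rho_W\otimes\mathcal{J}_0(\sigma_A))$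 extended linearly. Then $\mathcal{R}$ is a superchannel from $\mathrm{CPTP}(\mathcal{H}_W,\mathcal{H}_Y)$ to $\mathrm{CPTP}(\mathcal{H}_W\otimes\mathcal{H}_A,\mathcal{H}_Y)$. Moreover, if $\Gamma\circ(\mathcal{I}_W\otimes\mathcal{J})=\Gamma$, then $\mathcal{R}(\mathcal{S}_3(\Gamma))=\Gamma$.
   Context: $\mathrm{CPTP}(\mathcal{H},\mathcal{K})$ denotes the set of quantum channels from operators on $\mathcal{H}$ to operators on $\mathcal{K}$; $\mathcal{I}_W$ is the identity channel on $\mathcal{H}_W$. A superchannel is a linear map on linear maps sending channels to channels that can be realized as $\mathcal{N}\mapsto\mathcal{E}_{\rm post}\circ(\mathcal{N}\otimes\mathcal{I}_M)\circ\mathcal{E}_{\rm pre}$ for some ancilla system $M$ and quantum channels $\mathcal{E}_{\rm pre},\mathcal{E}_{\rm post}$ (i.e. it is deterministically implementable given one black-box use of the input channel). *)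

theory Defs
  imports Main "HOL-Library.Complex_Order"
begin

text \<open>Operators on a finite-dimensional Hilbert space with orthonormal basis indexed
  by a type 'i are represented as matrices 'i => 'i => complex.  For ancilla systems
  of arbitrary finite dimension m we use the index type nat together with the
  carrier set {..<m}; therefore the basic notions are relativised to a carrier set D
  of basis indices (for the systems W, A, Y this carrier is UNIV of a finite type).\<close>

type_synonym 'i op = "'i \<Rightarrow> 'i \<Rightarrow> complex"

definition supp_on :: "'i set \<Rightarrow> 'i op \<Rightarrow> bool" where
  "supp_on D A \<longleftrightarrow> (\<forall>i j. (i \<notin> D \<or> j \<notin> D) \<longrightarrow> A i j = 0)"

definition psd_on :: "'i set \<Rightarrow> 'i op \<Rightarrow> bool" where
  "psd_on D A \<longleftrightarrow> (\<forall>v :: 'i \<Rightarrow> complex. 0 \<le> (\<Sum>i\<in>D. \<Sum>j\<in>D. cnj (v i) * A i j * v j))"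

definition trace_on :: "'i set \<Rightarrow> 'i op \<Rightarrow> complex" where
  "trace_on D A = (\<Sum>i\<in>D. A i i)"

definition lin_on :: "'i set \<Rightarrow> ('i op \<Rightarrow> 'j op) \<Rightarrow> bool" where
  "lin_on D N \<longleftrightarrow> (\<forall>A B (c::complex). supp_on D A \<longrightarrow> supp_on D B \<longrightarrow>
      N (\<lambda>i j. A i j + c * B i j) = (\<lambda>i j. N A i j + c * N B i j))"

definition tensor_id :: "nat \<Rightarrow> ('i op \<Rightarrow> 'j op) \<Rightarrow> ('i \<times> nat) op \<Rightarrow> ('j \<times> nat) op" where
  "tensor_id k N Z = (\<lambda>(y, a) (y', b). if a < k \<and> b < k
       then N (\<lambda>w w'. Z (w, a) (w', b)) y y' else 0)"

definition channel_on :: "'i set \<Rightarrow> 'j set \<Rightarrow> ('i op \<Rightarrow> 'j op) \<Rightarrow> bool" where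
  "channel_on D E N \<longleftrightarrow>
     lin_on D N \<and>
     (\<forall>A. supp_on D A \<longrightarrow> supp_on E (N A)) \<and>
     (\<forall>A. supp_on D A \<longrightarrow> trace_on E (N A) = trace_on D A) \<and>
     (\<forall>k Z. supp_on (D \<times> {..<k}) Z \<longrightarrow> psd_on (D \<times> {..<k}) Z \<longrightarrow>
            psd_on (E \<times> {..<k}) (tensor_id k N Z))"

abbreviation is_channel :: "('i op \<Rightarrow> 'j op) \<Rightarrow> bool" where
  "is_channel N \<equiv> channel_on UNIV UNIV N"

definition is_superchannel ::
  "((('x::finite) op \<Rightarrow> ('y::finite) op) \<Rightarrow> (('x2::finite) op \<Rightarrow> ('y2::finite) op)) \<Rightarrow> bool" where
  "is_superchannel S \<longleftrightarrow>
     (\<forall>N. is_channel N \<longrightarrow> is_channel (S N)) \<and>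
     (\<exists>m (Epre :: 'x2 op \<Rightarrow> ('x \<times> nat) op) (Epost :: ('y \<times> nat) op \<Rightarrow> 'y2 op).
        channel_on UNIV (UNIV \<times> {..<m}) Epre \<and>
        channel_on (UNIV \<times> {..<m}) UNIV Epost \<and>
        (\<forall>N. lin_on UNIV N \<longrightarrow> S N = (\<lambda>X. Epost (tensor_id m N (Epre X)))))"

definition mmul :: "('i::finite) op \<Rightarrow> 'i op \<Rightarrow> 'i op" where
  "mmul A B = (\<lambda>i j. \<Sum>k\<in>UNIV. A i k * B k j)"

definition idop :: "'i op" where
  "idop = (\<lambda>i j. if i = j then 1 else 0)"

definition proj :: "('i \<Rightarrow> complex) \<Rightarrow> 'i op" where
  "proj \<phi> = (\<lambda>i j. \<phi> i * cnj (\<phi> j))"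

definition kron :: "'a op \<Rightarrow> 'b op \<Rightarrow> ('a \<times> 'b) op" where
  "kron A B = (\<lambda>(a, b) (a', b'). A a a' * B b b')"

definition id_tensor :: "('a op \<Rightarrow> 'b op) \<Rightarrow> ('w \<times> 'a) op \<Rightarrow> ('w \<times> 'b) op" where
  "id_tensor F X = (\<lambda>(w, a) (w', a'). F (\<lambda>b b'. X (w, b) (w', b')) a a')"

definition ptrace2 :: "('w \<times> ('a::finite)) op \<Rightarrow> 'w op" where
  "ptrace2 X = (\<lambda>w w'. \<Sum>a\<in>UNIV. X (w, a) (w', a))"

definition unit_vec :: "('i::finite \<Rightarrow> complex) \<Rightarrow> bool" where
  "unit_vec \<phi> \<longleftrightarrow> (\<Sum>i\<in>UNIV. cnj (\<phi> i) * \<phi> i) = 1"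

definition density :: "('i::finite) op \<Rightarrow> bool" where
  "density \<tau> \<longleftrightarrow> psd_on UNIV \<tau> \<and> trace_on UNIV \<tau> = 1"

definition J1 :: "('a::finite \<Rightarrow> complex) \<Rightarrow> 'a op \<Rightarrow> 'a op" where
  "J1 \<phi> \<sigma> = mmul (mmul (proj \<phi>) \<sigma>) (proj \<phi>)"

definition J0 :: "('a::finite \<Rightarrow> complex) \<Rightarrow> 'a op \<Rightarrow> 'a op" where
  "J0 \<phi> \<sigma> = (let Q = (\<lambda>i j. idop i j - proj \<phi> i j) in mmul (mmul Q \<sigma>) Q)"

definition Jmap :: "('a::finite \<Rightarrow> complex) \<Rightarrow> 'a op \<Rightarrow> 'a op" where
  "Jmap \<phi> \<sigma> = (\<lambda>i j. J1 \<phi> \<sigma> i j + J0 \<phi> \<sigma> i j)"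

definition S3 :: "('a::finite \<Rightarrow> complex) \<Rightarrow> (('w \<times> 'a) op \<Rightarrow> 'y op) \<Rightarrow> 'w op \<Rightarrow> 'y op" where
  "S3 \<phi> N = (\<lambda>\<rho>. N (kron \<rho> (proj \<phi>)))"

definition Rmap :: "('a::finite \<Rightarrow> complex) \<Rightarrow> (('w::finite \<times> 'a) op \<Rightarrow> ('y::finite) op)
     \<Rightarrow> 'w op \<Rightarrow> ('w op \<Rightarrow> 'y op) \<Rightarrow> ('w \<times> 'a) op \<Rightarrow> 'y op" where
  "Rmap \<phi> \<Gamma> \<tau> M = (\<lambda>X. (\<lambda>i j. M (ptrace2 (id_tensor (J1 \<phi>) X)) i j
       + trace_on UNIV (M \<tau>) * \<Gamma> (id_tensor (J0 \<phi>) X) i j))"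

end

theory Submission
  imports Defs
begin


lemma psd_on_cong: "(\<And>i j. i \<in> S \<Longrightarrow> j \<in> S \<Longrightarrow> A i j = B i j) \<Longrightarrow> psd_on S A = psd_on S B"
  unfolding psd_on_def by (simp cong: sum.cong)

lemma psd_add: "psd_on S A \<Longrightarrow> psd_on S B \<Longrightarrow> psd_on S (\<lambda>i j. A i j + B i j)"
  unfolding psd_on_def by (simp add: distrib_left distrib_right sum.distrib add_nonneg_nonneg)

lemma psd_sum: "finite R \<Longrightarrow> (\<And>r. r \<in> R \<Longrightarrow> psd_on S (A r)) \<Longrightarrow> psd_on S (\<lambda>i j. \<Sum>r\<in>R. A r i j)"
proof (induction R rule: finite_induct)
  case empty then show ?case by (simp add: psd_on_def)
next
  case (insert x F)
  then show ?case using psd_add[of S "A x" "\<lambda>i j. \<Sum>r\<in>F. A r i j"] by simp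
qed

lemma sum4_swap: "(\<Sum>p\<in>A. \<Sum>q\<in>B. \<Sum>s\<in>C. \<Sum>t\<in>D. f p q s t) = (\<Sum>s\<in>C. \<Sum>t\<in>D. \<Sum>p\<in>A. \<Sum>q\<in>B. f p q s t)"
proof -
  have "(\<Sum>p\<in>A. \<Sum>q\<in>B. \<Sum>s\<in>C. \<Sum>t\<in>D. f p q s t) = (\<Sum>p\<in>A. \<Sum>s\<in>C. \<Sum>q\<in>B. \<Sum>t\<in>D. f p q s t)"
    by (intro sum.cong refl sum.swap)
  also have "\<dots> = (\<Sum>p\<in>A. \<Sum>s\<in>C. \<Sum>t\<in>D. \<Sum>q\<in>B. f p q s t)"
    by (intro sum.cong refl sum.swap)
  also have "\<dots> = (\<Sum>s\<in>C. \<Sum>p\<in>A. \<Sum>t\<in>D. \<Sum>q\<in>B. f p q s t)"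
    by (rule sum.swap)
  also have "\<dots> = (\<Sum>s\<in>C. \<Sum>t\<in>D. \<Sum>p\<in>A. \<Sum>q\<in>B. f p q s t)"
    by (intro sum.cong refl sum.swap)
  finally show ?thesis .
qed

lemma psd_congr:
  assumes "finite S" "finite T" "psd_on S Z"
  shows "psd_on T (\<lambda>p q. \<Sum>s\<in>S. \<Sum>s'\<in>S. L p s * Z s s' * cnj (L q s'))"
  unfolding psd_on_def
proof
  fix v :: "_ \<Rightarrow> complex"
  define u where "u s = (\<Sum>p\<in>T. cnj (L p s) * v p)" for s
  have "(\<Sum>p\<in>T. \<Sum>q\<in>T. cnj (v p) * (\<Sum>s\<in>S. \<Sum>s'\<in>S. L p s * Z s s' * cnj (L q s')) * v q)
     = (\<Sum>p\<in>T. \<Sum>q\<in>T. \<Sum>s\<in>S. \<Sum>s'\<in>S. (cnj (v p) * L p s) * Z s s' * (cnj (L q s') * v q))"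
    by (simp add: sum_distrib_left sum_distrib_right mult_ac)
  also have "\<dots> = (\<Sum>s\<in>S. \<Sum>s'\<in>S. \<Sum>p\<in>T. \<Sum>q\<in>T. (cnj (v p) * L p s) * Z s s' * (cnj (L q s') * v q))"
    by (rule sum4_swap)
  also have "\<dots> = (\<Sum>s\<in>S. \<Sum>s'\<in>S. cnj (u s) * Z s s' * u s')"
    by (simp add: u_def sum_distrib_left sum_distrib_right mult_ac)
  also have "0 \<le> \<dots>" using assms(3) unfolding psd_on_def by blast
  finally show "0 \<le> (\<Sum>p\<in>T. \<Sum>q\<in>T. cnj (v p) * (\<Sum>s\<in>S. \<Sum>s'\<in>S. L p s * Z s s' * cnj (L q s')) * v q)" .
qed

lemma sum_times: "(\<Sum>s\<in>A\<times>B. g s) = (\<Sum>x\<in>A. \<Sum>y\<in>B. g (x,y))"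
  by (simp add: sum.cartesian_product)

lemma if0_mult: "(if P then x else (0::complex)) * y = (if P then x * y else 0)" by simp
lemma mult_if0: "y * (if P then x else (0::complex)) = (if P then y * x else 0)" by simp
lemma cnj_if0: "cnj (if P then x else 0) = (if P then cnj x else 0)" by simp
lemma sum_if0: "(\<Sum>x\<in>A. if P then f x else (0::'b::comm_monoid_add)) = (if P then sum f A else 0)" by simp

lemma kraus_cp:
  fixes F :: "'i op \<Rightarrow> 'j op" and K :: "'r \<Rightarrow> 'j \<Rightarrow> 'i \<Rightarrow> complex" and Z :: "('i \<times> nat) op"
  assumes "finite D" "finite E" "finite R"
    and F: "\<And>X e e'. e \<in> E \<Longrightarrow> e' \<in> E \<Longrightarrow> F X e e' = (\<Sum>r\<in>R. \<Sum>d\<in>D. \<Sum>d'\<in>D. K r e d * X d d' * cnj (K r e' d'))"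
    and Z: "psd_on (D \<times> {..<k}) Z"
  shows "psd_on (E \<times> {..<k}) (tensor_id k F Z)"
proof -
  define L where "L r (p::'j\<times>nat) (s::'i\<times>nat) = (if snd s = snd p then K r (fst p) (fst s) else 0)" for r p s
  have "psd_on (E\<times>{..<k}) (\<lambda>p q. \<Sum>r\<in>R. \<Sum>s\<in>D\<times>{..<k}. \<Sum>s'\<in>D\<times>{..<k}. L r p s * Z s s' * cnj (L r q s'))"
    by (rule psd_sum[OF assms(3)], rule psd_congr) (use assms in auto)
  moreover have "tensor_id k F Z p q = (\<Sum>r\<in>R. \<Sum>s\<in>D\<times>{..<k}. \<Sum>s'\<in>D\<times>{..<k}. L r p s * Z s s' * cnj (L r q s'))"
    if pq0: "p \<in> E\<times>{..<k}" "q \<in> E\<times>{..<k}" for p q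
  proof -
    obtain e a e' b where pq: "p = (e,a)" "q = (e',b)" "e \<in> E" "e' \<in> E" "a < k" "b < k"
      using pq0 by (cases p, cases q) auto
    have "(\<Sum>s\<in>D\<times>{..<k}. \<Sum>s'\<in>D\<times>{..<k}. L r p s * Z s s' * cnj (L r q s'))
        = (\<Sum>d\<in>D. \<Sum>d'\<in>D. K r e d * Z (d,a) (d',b) * cnj (K r e' d'))" for r
      using pq by (simp add: sum_times L_def if0_mult mult_if0 cnj_if0 sum_if0 sum.swap[of _ "{..<k}"])
    then show ?thesis using pq F by (simp add: tensor_id_def)
  qed
  ultimately show ?thesis by (subst psd_on_cong) auto
qed



lemma quad_restrict:
  assumes "finite D" "S \<subseteq> D" "\<And>x. x \<notin> S \<Longrightarrow> v x = 0"
  shows "(\<Sum>i\<in>D. \<Sum>j\<in>D. cnj (v i) * A i j * v j) = (\<Sum>i\<in>S. \<Sum>j\<in>S. cnj (v i) * A i j * v j)"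
proof -
  have "(\<Sum>i\<in>D. \<Sum>j\<in>D. cnj (v i) * A i j * v j) = (\<Sum>i\<in>D. \<Sum>j\<in>S. cnj (v i) * A i j * v j)"
    by (rule sum.cong[OF refl], rule sum.mono_neutral_right) (use assms in auto)
  also have "\<dots> = (\<Sum>i\<in>S. \<Sum>j\<in>S. cnj (v i) * A i j * v j)"
    by (rule sum.mono_neutral_right) (use assms in auto)
  finally show ?thesis .
qed

lemma psd_two:
  assumes "psd_on D A" "finite D" "i \<in> D" "j \<in> D" "i \<noteq> j"
  shows "0 \<le> cnj a * A i i * a + cnj a * A i j * b + cnj b * A j i * a + cnj b * A j j * b"
proof -
  define v where "v x = (if x = i then a else if x = j then b else 0)" for x
  have "0 \<le> (\<Sum>x\<in>D. \<Sum>y\<in>D. cnj (v x) * A x y * v y)" using assms(1) unfolding psd_on_def by blast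
  also have "\<dots> = (\<Sum>x\<in>{i,j}. \<Sum>y\<in>{i,j}. cnj (v x) * A x y * v y)"
    by (rule quad_restrict) (use assms in \<open>auto simp: v_def\<close>)
  also have "\<dots> = cnj a * A i i * a + cnj a * A i j * b + cnj b * A j i * a + cnj b * A j j * b"
    using assms(5) by (simp add: v_def)
  finally show ?thesis .
qed

lemma psd_diag:
  assumes "psd_on D A" "finite D" "i \<in> D"
  shows "0 \<le> A i i"
proof -
  define v where "v x = (if x = i then 1 else 0::complex)" for x
  have "0 \<le> (\<Sum>x\<in>D. \<Sum>y\<in>D. cnj (v x) * A x y * v y)" using assms(1) unfolding psd_on_def by blast
  also have "\<dots> = (\<Sum>x\<in>{i}. \<Sum>y\<in>{i}. cnj (v x) * A x y * v y)"
    by (rule quad_restrict) (use assms in \<open>auto simp: v_def\<close>)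
  also have "\<dots> = A i i" by (simp add: v_def)
  finally show ?thesis .
qed

lemma psd_herm:
  assumes "psd_on D A" "finite D" "i \<in> D" "j \<in> D"
  shows "A j i = cnj (A i j)"
proof (cases "i = j")
  case True
  then show ?thesis using psd_diag[OF assms(1,2,3)]
    by (simp add: less_eq_complex_def complex_eq_iff)
next
  case False
  have d1: "0 \<le> A i i" "0 \<le> A j j" using psd_diag[OF assms(1,2)] assms(3,4) by auto
  have 1: "0 \<le> cnj 1 * A i i * 1 + cnj 1 * A i j * 1 + cnj 1 * A j i * 1 + cnj 1 * A j j * 1"
    by (rule psd_two) (use assms False in auto)
  have 2: "0 \<le> cnj 1 * A i i * 1 + cnj 1 * A i j * \<i> + cnj \<i> * A j i * 1 + cnj \<i> * A j j * \<i>"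
    by (rule psd_two) (use assms False in auto)
  have "Im (A i j) + Im (A j i) = 0" using 1 d1 by (simp add: less_eq_complex_def)
  moreover have "Re (A i j) - Re (A j i) = 0" using 2 d1 by (simp add: less_eq_complex_def)
  ultimately show ?thesis by (simp add: complex_eq_iff)
qed

lemma psd_zero_diag:
  assumes "psd_on D A" "finite D" "x \<in> D" "j \<in> D" "A x x = 0"
  shows "A x j = 0"
proof (rule ccontr)
  assume ne: "A x j \<noteq> 0"
  then have xj: "x \<noteq> j" using assms by auto
  define z where "z = A x j"
  define n where "n = cmod z ^ 2"
  have n: "n > 0" using ne by (simp add: n_def z_def)
  have zn: "cnj z * z = complex_of_real n"
    unfolding n_def by (subst complex_norm_square) (rule mult.commute)
  define r where "r = (Re (A j j) + 1) / (2 * n)"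
  define t where "t = - complex_of_real r * z"
  have h: "A j x = cnj z" using psd_herm[OF assms(1,2,3,4)] unfolding z_def .
  have "0 \<le> cnj t * A x x * t + cnj t * A x j * 1 + cnj 1 * A j x * t + cnj 1 * A j j * 1"
    by (rule psd_two) (use assms xj in auto)
  also have "cnj t * A x x * t + cnj t * A x j * 1 + cnj 1 * A j x * t + cnj 1 * A j j * 1
      = A j j - 2 * complex_of_real r * (cnj z * z)"
    unfolding assms(5) h z_def[symmetric] t_def by (simp add: algebra_simps)
  finally have "0 \<le> A j j - 2 * complex_of_real r * complex_of_real n" unfolding zn .
  then have "0 \<le> Re (A j j) - 2 * r * n" by (simp add: less_eq_complex_def)
  moreover have "2 * r * n = Re (A j j) + 1" using n by (simp add: r_def)
  ultimately show False by simp
qed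

lemma psd_restrict:
  assumes "psd_on D A" "finite D" "F \<subseteq> D"
  shows "psd_on F A"
  unfolding psd_on_def
proof
  fix v :: "_ \<Rightarrow> complex"
  define v' where "v' i = (if i \<in> F then v i else 0)" for i
  have "0 \<le> (\<Sum>i\<in>D. \<Sum>j\<in>D. cnj (v' i) * A i j * v' j)" using assms(1) unfolding psd_on_def by blast
  also have "\<dots> = (\<Sum>i\<in>F. \<Sum>j\<in>F. cnj (v' i) * A i j * v' j)"
    by (rule quad_restrict) (use assms in \<open>auto simp: v'_def\<close>)
  also have "\<dots> = (\<Sum>i\<in>F. \<Sum>j\<in>F. cnj (v i) * A i j * v j)"
    by (simp add: v'_def)
  finally show "0 \<le> (\<Sum>i\<in>F. \<Sum>j\<in>F. cnj (v i) * A i j * v j)" .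
qed

lemma schur_step:
  assumes psd: "psd_on (insert x F) A" and fin: "finite F" and xF: "x \<notin> F"
    and al: "A x x = complex_of_real \<alpha>" "\<alpha> > 0"
  shows "psd_on F (\<lambda>i j. A i j - (A i x / complex_of_real (sqrt \<alpha>)) * cnj (A j x / complex_of_real (sqrt \<alpha>)))"
  unfolding psd_on_def
proof
  fix v :: "_ \<Rightarrow> complex"
  define c where "c = complex_of_real (sqrt \<alpha>)"
  have cc: "c * c = complex_of_real \<alpha>" "cnj c = c" "c \<noteq> 0" using al(2)
    by (simp_all add: c_def flip: of_real_mult)
  define Q where "Q = (\<Sum>i\<in>F. \<Sum>j\<in>F. cnj (v i) * A i j * v j)"
  define s where "s = (\<Sum>j\<in>F. A x j * v j)"
  define t where "t = - s / complex_of_real \<alpha>"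
  define v' where "v' i = (if i = x then t else v i)" for i
  have herm: "A i x = cnj (A x i)" if "i \<in> F" for i
    by (rule psd_herm[OF psd]) (use fin that in auto)
  have s1: "(\<Sum>i\<in>F. cnj (v i) * A i x) = cnj s"
    by (simp add: s_def herm mult.commute cong: sum.cong)
  have "0 \<le> (\<Sum>i\<in>insert x F. \<Sum>j\<in>insert x F. cnj (v' i) * A i j * v' j)"
    using psd unfolding psd_on_def by blast
  also have "\<dots> = cnj t * A x x * t + (\<Sum>j\<in>F. cnj t * A x j * v j)
       + ((\<Sum>i\<in>F. cnj (v i) * A i x) * t + Q)"
  proof -
    have vF: "v' i = v i" if "i \<in> F" for i using that xF by (auto simp: v'_def)
    have e1: "(\<Sum>j\<in>insert x F. cnj (v' i) * A i j * v' j) = cnj (v' i) * A i x * t + (\<Sum>j\<in>F. cnj (v' i) * A i j * v j)" for i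
      using xF fin vF by (simp add: v'_def)
    have "(\<Sum>i\<in>insert x F. \<Sum>j\<in>insert x F. cnj (v' i) * A i j * v' j)
       = (\<Sum>j\<in>insert x F. cnj (v' x) * A x j * v' j) + (\<Sum>i\<in>F. \<Sum>j\<in>insert x F. cnj (v' i) * A i j * v' j)"
      using xF fin by simp
    also have "\<dots> = (cnj t * A x x * t + (\<Sum>j\<in>F. cnj t * A x j * v j)) + (\<Sum>i\<in>F. cnj (v i) * A i x * t + (\<Sum>j\<in>F. cnj (v i) * A i j * v j))"
      unfolding e1 using vF by (simp add: v'_def)
    also have "\<dots> = cnj t * A x x * t + (\<Sum>j\<in>F. cnj t * A x j * v j) + ((\<Sum>i\<in>F. cnj (v i) * A i x) * t + Q)"
      by (simp add: Q_def sum.distrib sum_distrib_right)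
    finally show ?thesis .
  qed
  also have "\<dots> = cnj t * A x x * t + cnj t * s + cnj s * t + Q"
    by (simp add: s1 s_def sum_distrib_left mult.assoc)
  also have "\<dots> = Q - cnj s * s / complex_of_real \<alpha>"
    using al by (simp add: t_def field_simps)
  finally have ge: "0 \<le> Q - cnj s * s / complex_of_real \<alpha>" .
  have "(\<Sum>i\<in>F. \<Sum>j\<in>F. cnj (v i) * (A i j - A i x / c * cnj (A j x / c)) * v j)
      = Q - (\<Sum>i\<in>F. \<Sum>j\<in>F. (cnj (v i) * A i x / c) * (cnj (A j x) * v j / c))"
    by (simp add: Q_def algebra_simps sum_subtractf cc)
  also have "(\<Sum>i\<in>F. \<Sum>j\<in>F. (cnj (v i) * A i x / c) * (cnj (A j x) * v j / c))
      = (\<Sum>i\<in>F. cnj (v i) * A i x) * (\<Sum>j\<in>F. cnj (A j x) * v j) / (c * c)"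
    by (simp add: sum_product sum_divide_distrib)
  also have "(\<Sum>j\<in>F. cnj (A j x) * v j) = s"
    by (simp add: s_def herm cong: sum.cong)
  finally show "0 \<le> (\<Sum>i\<in>F. \<Sum>j\<in>F. cnj (v i) * (A i j - A i x / c * cnj (A j x / c)) * v j)"
    using ge by (simp add: s1 cc)
qed

lemma psd_decomp:
  assumes "finite D" "psd_on D A"
  shows "\<exists>u. \<forall>i\<in>D. \<forall>j\<in>D. A i j = (\<Sum>r\<in>D. u r i * cnj (u r j))"
  using assms
proof (induction D arbitrary: A rule: finite_induct)
  case empty
  then show ?case by simp
next
  case (insert x F)
  note psd = insert.prems
  have finI: "finite (insert x F)" using insert.hyps by simp
  have axx: "0 \<le> A x x" by (rule psd_diag[OF psd finI]) simp
  define \<alpha> where "\<alpha> = Re (A x x)"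
  have Axx: "A x x = complex_of_real \<alpha>" "\<alpha> \<ge> 0" using axx
    by (simp_all add: \<alpha>_def less_eq_complex_def complex_eq_iff)
  define c where "c = complex_of_real (sqrt \<alpha>)"
  define w where "w i = (if \<alpha> > 0 then A i x / c else 0)" for i
  define B where "B i j = A i j - w i * cnj (w j)" for i j
  have Bpsd: "psd_on F B"
  proof (cases "\<alpha> > 0")
    case True
    have "B = (\<lambda>i j. A i j - (A i x / complex_of_real (sqrt \<alpha>)) * cnj (A j x / complex_of_real (sqrt \<alpha>)))"
      by (intro ext) (simp add: B_def w_def c_def True)
    then show ?thesis using schur_step[OF psd insert.hyps(1,2) Axx(1) True] by simp
  next
    case False
    then have "B = A" by (simp add: B_def w_def fun_eq_iff)
    then show ?thesis using psd_restrict[OF psd finI] by auto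
  qed
  obtain u' where u': "\<forall>i\<in>F. \<forall>j\<in>F. B i j = (\<Sum>r\<in>F. u' r i * cnj (u' r j))"
    using insert.IH[OF Bpsd] by blast
  have herm: "A j i = cnj (A i j)" if "i \<in> insert x F" "j \<in> insert x F" for i j
    by (rule psd_herm[OF psd finI that])
  have key: "A i j = w i * cnj (w j)" if "i \<in> insert x F" "j \<in> insert x F" "i = x \<or> j = x" for i j
  proof (cases "\<alpha> > 0")
    case True
    have cc: "c * c = complex_of_real \<alpha>" "cnj c = c" "c \<noteq> 0" using True
      by (simp_all add: c_def flip: of_real_mult)
    have wx: "w x = c" using True cc Axx(1) by (simp add: w_def field_simps)
    show ?thesis
    proof (cases "i = x")
      case True
      then show ?thesis using wx cc herm[of j x] that by (simp add: w_def \<open>\<alpha> > 0\<close>)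
    next
      case False
      then have "j = x" using that by auto
      then show ?thesis using wx cc by (simp add: w_def \<open>\<alpha> > 0\<close>)
    qed
  next
    case False
    then have z: "A x x = 0" using Axx by simp
    have "A x j = 0" "A x i = 0" using psd_zero_diag[OF psd finI _ _ z] that by auto
    then show ?thesis using False that herm[of x i] by (auto simp: w_def)
  qed
  define u where "u r i = (if r = x then w i else if i = x then 0 else u' r i)" for r i
  have "\<forall>i\<in>insert x F. \<forall>j\<in>insert x F. A i j = (\<Sum>r\<in>insert x F. u r i * cnj (u r j))"
  proof (intro ballI)
    fix i j assume ij: "i \<in> insert x F" "j \<in> insert x F"
    have "(\<Sum>r\<in>insert x F. u r i * cnj (u r j)) = w i * cnj (w j) + (\<Sum>r\<in>F. u r i * cnj (u r j))"
      using insert.hyps by (simp add: u_def)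
    also have "(\<Sum>r\<in>F. u r i * cnj (u r j)) = (\<Sum>r\<in>F. (if i = x then 0 else u' r i) * cnj (if j = x then 0 else u' r j))"
      using insert.hyps by (intro sum.cong refl) (auto simp: u_def)
    finally have eq: "(\<Sum>r\<in>insert x F. u r i * cnj (u r j)) = w i * cnj (w j) + (\<Sum>r\<in>F. (if i = x then 0 else u' r i) * cnj (if j = x then 0 else u' r j))" .
    show "A i j = (\<Sum>r\<in>insert x F. u r i * cnj (u r j))"
    proof (cases "i = x \<or> j = x")
      case True
      then show ?thesis unfolding eq using key[OF ij True] by auto
    next
      case False
      then have "i \<in> F" "j \<in> F" using ij by auto
      then have "B i j = (\<Sum>r\<in>F. u' r i * cnj (u' r j))" using u' by blast
      then show ?thesis unfolding eq using False by (simp add: B_def algebra_simps)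
    qed
  qed
  then show ?case by blast
qed



definition Qm :: "('a \<Rightarrow> complex) \<Rightarrow> 'a op" where
  "Qm \<phi> = (\<lambda>i j. idop i j - proj \<phi> i j)"

lemma unit_sum: "unit_vec \<phi> \<Longrightarrow> (\<Sum>a\<in>UNIV. \<phi> a * cnj (\<phi> a)) = 1"
  by (simp add: unit_vec_def mult.commute)

lemma A1_formula:
  assumes "unit_vec \<phi>"
  shows "ptrace2 (id_tensor (J1 \<phi>) X) w w' = (\<Sum>b\<in>UNIV. \<Sum>c\<in>UNIV. cnj (\<phi> b) * X (w,b) (w',c) * \<phi> c)"
proof -
  have "ptrace2 (id_tensor (J1 \<phi>) X) w w' = (\<Sum>a\<in>UNIV. \<Sum>k\<in>UNIV. \<Sum>l\<in>UNIV. (\<phi> a * cnj (\<phi> a)) * (cnj (\<phi> l) * X (w,l) (w',k) * \<phi> k))"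
    by (simp add: ptrace2_def id_tensor_def J1_def mmul_def proj_def sum_distrib_left sum_distrib_right mult_ac)
  also have "\<dots> = (\<Sum>a\<in>UNIV. (\<phi> a * cnj (\<phi> a)) * (\<Sum>k\<in>UNIV. \<Sum>l\<in>UNIV. cnj (\<phi> l) * X (w,l) (w',k) * \<phi> k))"
    by (simp add: sum_distrib_left)
  also have "\<dots> = (\<Sum>k\<in>UNIV. \<Sum>l\<in>UNIV. cnj (\<phi> l) * X (w,l) (w',k) * \<phi> k)"
    by (simp add: sum_distrib_right[symmetric] unit_sum[OF assms])
  also have "\<dots> = (\<Sum>b\<in>UNIV. \<Sum>c\<in>UNIV. cnj (\<phi> b) * X (w,b) (w',c) * \<phi> c)"
    by (rule sum.swap)
  finally show ?thesis .
qed

lemma A0_formula: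
  "id_tensor (J0 \<phi>) X (w,a) (w',a') = (\<Sum>b\<in>UNIV. \<Sum>c\<in>UNIV. Qm \<phi> a b * X (w,b) (w',c) * Qm \<phi> c a')"
proof -
  have "id_tensor (J0 \<phi>) X (w,a) (w',a') = (\<Sum>c\<in>UNIV. \<Sum>b\<in>UNIV. Qm \<phi> a b * X (w,b) (w',c) * Qm \<phi> c a')"
    by (simp add: id_tensor_def J0_def Let_def mmul_def Qm_def[symmetric] sum_distrib_right)
  also have "\<dots> = (\<Sum>b\<in>UNIV. \<Sum>c\<in>UNIV. Qm \<phi> a b * X (w,b) (w',c) * Qm \<phi> c a')"
    by (rule sum.swap)
  finally show ?thesis .
qed

lemma Qm_herm: "cnj (Qm \<phi> a b) = Qm \<phi> b a"
  by (simp add: Qm_def idop_def proj_def)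

lemma Qm_idem:
  assumes "unit_vec \<phi>"
  shows "(\<Sum>a\<in>UNIV. Qm \<phi> c a * Qm \<phi> a b) = Qm \<phi> c b"
proof -
  have "(\<Sum>a\<in>UNIV. Qm \<phi> c a * Qm \<phi> a b)
     = (\<Sum>a\<in>UNIV. idop c a * idop a b) - (\<Sum>a\<in>UNIV. idop c a * proj \<phi> a b)
       - (\<Sum>a\<in>UNIV. proj \<phi> c a * idop a b) + (\<Sum>a\<in>UNIV. proj \<phi> c a * proj \<phi> a b)"
    by (simp add: Qm_def algebra_simps sum.distrib sum_subtractf)
  also have "(\<Sum>a\<in>UNIV. proj \<phi> c a * proj \<phi> a b) = \<phi> c * (\<Sum>a\<in>UNIV. \<phi> a * cnj (\<phi> a)) * cnj (\<phi> b)"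
    by (simp add: proj_def sum_distrib_left sum_distrib_right mult_ac)
  also have "\<dots> = proj \<phi> c b" by (simp add: unit_sum[OF assms] proj_def)
  also have "(\<Sum>a\<in>UNIV. idop c a * idop a b) = idop c b" by (simp add: idop_def if0_mult)
  also have "(\<Sum>a\<in>UNIV. idop c a * proj \<phi> a b) = proj \<phi> c b" by (simp add: idop_def if0_mult)
  also have "(\<Sum>a\<in>UNIV. proj \<phi> c a * idop a b) = proj \<phi> c b" by (simp add: idop_def mult_if0)
  finally show ?thesis by (simp add: Qm_def)
qed

lemma J1_kron:
  assumes "unit_vec \<phi>"
  shows "kron (ptrace2 (id_tensor (J1 \<phi>) X)) (proj \<phi>) = id_tensor (J1 \<phi>) X"
proof (intro ext, clarify)
  fix w a w' a'
  have "id_tensor (J1 \<phi>) X (w,a) (w',a') = (\<Sum>k\<in>UNIV. \<Sum>l\<in>UNIV. (\<phi> a * cnj (\<phi> a')) * (cnj (\<phi> l) * X (w,l) (w',k) * \<phi> k))"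
    by (simp add: id_tensor_def J1_def mmul_def proj_def sum_distrib_left sum_distrib_right mult_ac)
  also have "\<dots> = (\<phi> a * cnj (\<phi> a')) * (\<Sum>b\<in>UNIV. \<Sum>c\<in>UNIV. cnj (\<phi> b) * X (w,b) (w',c) * \<phi> c)"
    unfolding sum_distrib_left by (rule sum.swap)
  finally show "kron (ptrace2 (id_tensor (J1 \<phi>) X)) (proj \<phi>) (w,a) (w',a') = id_tensor (J1 \<phi>) X (w,a) (w',a')"
    by (simp add: kron_def A1_formula[OF assms] proj_def mult_ac)
qed

lemma sum_single:
  assumes "finite A" "w \<in> A" "\<And>x. x \<in> A \<Longrightarrow> x \<noteq> w \<Longrightarrow> g x = 0"
  shows "sum g A = g w"
proof -
  have "sum g A = sum g {w}"
    by (rule sum.mono_neutral_right) (use assms in auto)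
  then show ?thesis by simp
qed

lemma delta_sum2:
  assumes "finite A" "finite B" "w \<in> A" "w' \<in> A"
  shows "(\<Sum>d\<in>A\<times>B. \<Sum>d'\<in>A\<times>B. (if fst d = w then L (snd d) else 0) * X d d' * cnj (if fst d' = w' then M (snd d') else 0))
       = (\<Sum>b\<in>B. \<Sum>c\<in>B. L b * X (w,b) (w',c) * cnj (M c))"
proof -
  have "(\<Sum>d\<in>A\<times>B. \<Sum>d'\<in>A\<times>B. (if fst d = w then L (snd d) else 0) * X d d' * cnj (if fst d' = w' then M (snd d') else 0))
      = (\<Sum>x\<in>A. \<Sum>b\<in>B. \<Sum>x'\<in>A. \<Sum>c\<in>B. (if x = w then L b else 0) * X (x,b) (x',c) * cnj (if x' = w' then M c else 0))"
    by (simp only: sum_times fst_conv snd_conv)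
  also have "\<dots> = (\<Sum>b\<in>B. \<Sum>x'\<in>A. \<Sum>c\<in>B. L b * X (w,b) (x',c) * cnj (if x' = w' then M c else 0))"
    by (subst sum_single[OF assms(1,3)]) auto
  also have "\<dots> = (\<Sum>b\<in>B. \<Sum>c\<in>B. L b * X (w,b) (w',c) * cnj (M c))"
    by (rule sum.cong[OF refl], subst sum_single[OF assms(1,4)]) auto
  finally show ?thesis .
qed

lemma kraus_cp2:
  fixes g :: "'r \<Rightarrow> 'j \<Rightarrow> 'a" and L :: "'r \<Rightarrow> 'j \<Rightarrow> 'b \<Rightarrow> complex"
    and Z :: "(('a\<times>'b) \<times> nat) op" and F :: "('a\<times>'b) op \<Rightarrow> 'j op"
  assumes "finite A" "finite B" "finite E" "finite R" "\<And>r e. r\<in>R \<Longrightarrow> e \<in> E \<Longrightarrow> g r e \<in> A"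
   and F: "\<And>X e e'. e\<in>E \<Longrightarrow> e'\<in>E \<Longrightarrow> F X e e' = (\<Sum>r\<in>R. \<Sum>b\<in>B. \<Sum>c\<in>B. L r e b * X (g r e, b) (g r e', c) * cnj (L r e' c))"
   and Z: "psd_on ((A\<times>B)\<times>{..<k}) Z"
  shows "psd_on (E\<times>{..<k}) (tensor_id k F Z)"
proof (rule kraus_cp[where K = "\<lambda>r e d. if fst d = g r e then L r e (snd d) else 0"])
  show "finite (A\<times>B)" "finite E" "finite R" using assms by auto
  show "psd_on ((A\<times>B)\<times>{..<k}) Z" by (rule Z)
  fix X e e' assume e: "e \<in> E" "e' \<in> E"
  show "F X e e' = (\<Sum>r\<in>R. \<Sum>d\<in>A\<times>B. \<Sum>d'\<in>A\<times>B. (if fst d = g r e then L r e (snd d) else 0) * X d d' * cnj (if fst d' = g r e' then L r e' (snd d') else 0))"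
    unfolding F[OF e] by (rule sum.cong[OF refl], rule delta_sum2[symmetric]) (use assms e in auto)
qed

lemma tensor_add: "tensor_id k (\<lambda>X i j. F X i j + G X i j) Z = (\<lambda>p q. tensor_id k F Z p q + tensor_id k G Z p q)"
  by (auto simp: tensor_id_def fun_eq_iff)

lemma tensor_comp: "tensor_id k (\<lambda>X. N (F X)) Z = tensor_id k N (tensor_id k F Z)"
  by (auto simp: tensor_id_def fun_eq_iff)

lemma supp_tensor: "supp_on (UNIV \<times> {..<k}) (tensor_id k F Z)"
  by (auto simp: supp_on_def tensor_id_def)

lemma lin_zero: "lin_on UNIV N \<Longrightarrow> N (\<lambda>i j. 0) = (\<lambda>i j. 0)"
  unfolding lin_on_def supp_on_def
  by (drule spec[of _ "\<lambda>i j. 0"], drule spec[of _ "\<lambda>i j. 0"], drule spec[of _ 1]) (simp add: fun_eq_iff)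

lemma lin_addc: "lin_on UNIV N \<Longrightarrow> N (\<lambda>i j. A i j + c * B i j) = (\<lambda>i j. N A i j + c * N B i j)"
  unfolding lin_on_def supp_on_def by blast

lemma lin_scale: assumes "lin_on UNIV N" shows "N (\<lambda>i j. c * A i j) = (\<lambda>i j. c * N A i j)"
proof -
  have "N (\<lambda>i j. (\<lambda>i j. 0) i j + c * A i j) = (\<lambda>i j. N (\<lambda>i j. 0) i j + c * N A i j)"
    by (rule lin_addc[OF assms])
  then show ?thesis using lin_zero[OF assms] by simp
qed

lemma sum3_swap: "(\<Sum>a\<in>A. \<Sum>b\<in>B. \<Sum>c\<in>C. f a b c) = (\<Sum>b\<in>B. \<Sum>c\<in>C. \<Sum>a\<in>A. f a b c)"
proof -
  have "(\<Sum>a\<in>A. \<Sum>b\<in>B. \<Sum>c\<in>C. f a b c) = (\<Sum>b\<in>B. \<Sum>a\<in>A. \<Sum>c\<in>C. f a b c)" by (rule sum.swap)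
  also have "\<dots> = (\<Sum>b\<in>B. \<Sum>c\<in>C. \<Sum>a\<in>A. f a b c)" by (intro sum.cong refl sum.swap)
  finally show ?thesis .
qed

lemma A1_lin:
  assumes "unit_vec \<phi>"
  shows "ptrace2 (id_tensor (J1 \<phi>) (\<lambda>i j. A i j + c * B i j))
       = (\<lambda>i j. ptrace2 (id_tensor (J1 \<phi>) A) i j + c * ptrace2 (id_tensor (J1 \<phi>) B) i j)"
  by (intro ext) (simp add: A1_formula[OF assms] algebra_simps sum.distrib sum_distrib_left)

lemma A0_lin:
  "id_tensor (J0 \<phi>) (\<lambda>i j. A i j + c * B i j)
       = (\<lambda>i j. id_tensor (J0 \<phi>) A i j + c * id_tensor (J0 \<phi>) B i j)"
proof (intro ext)
  fix p q :: "'a \<times> 'b"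
  show "id_tensor (J0 \<phi>) (\<lambda>i j. A i j + c * B i j) p q = id_tensor (J0 \<phi>) A p q + c * id_tensor (J0 \<phi>) B p q"
    by (cases p, cases q) (simp add: A0_formula algebra_simps sum.distrib sum_distrib_left)
qed

lemma A1_cp:
  fixes \<phi> :: "'a::finite \<Rightarrow> complex" and Z :: "(('w::finite \<times> 'a) \<times> nat) op"
  assumes "psd_on (UNIV \<times> {..<k}) Z" "unit_vec \<phi>"
  shows "psd_on (UNIV \<times> {..<k}) (tensor_id k (\<lambda>X. ptrace2 (id_tensor (J1 \<phi>) X)) Z)"
proof (rule kraus_cp2[where A = "UNIV::'w set" and B = "UNIV::'a set" and R = "UNIV::unit set"
      and g = "\<lambda>r e. e" and L = "\<lambda>r e b. cnj (\<phi> b)"])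
  show "psd_on ((UNIV \<times> UNIV) \<times> {..<k}) Z" using assms by simp
qed (auto simp: A1_formula[OF assms(2)])

lemma A0_cp:
  fixes \<phi> :: "'a::finite \<Rightarrow> complex" and Z :: "(('w::finite \<times> 'a) \<times> nat) op"
  assumes "psd_on (UNIV \<times> {..<k}) Z"
  shows "psd_on (UNIV \<times> {..<k}) (tensor_id k (id_tensor (J0 \<phi>)) Z)"
proof (rule kraus_cp2[where A = "UNIV::'w set" and B = "UNIV::'a set" and R = "UNIV::unit set"
      and g = "\<lambda>r e. fst e" and L = "\<lambda>r e b. Qm \<phi> (snd e) b"])
  show "psd_on ((UNIV \<times> UNIV) \<times> {..<k}) Z" using assms by simp
  fix X :: "('w \<times> 'a) op" and e e' :: "'w \<times> 'a"
  show "id_tensor (J0 \<phi>) X e e' = (\<Sum>r\<in>(UNIV::unit set). \<Sum>b\<in>UNIV. \<Sum>c\<in>UNIV. Qm \<phi> (snd e) b * X (fst e, b) (fst e', c) * cnj (Qm \<phi> (snd e') c))"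
    by (cases e, cases e') (simp add: A0_formula Qm_herm UNIV_unit card_UNIV_unit)
qed auto

lemma trace_split:
  fixes \<phi> :: "'a::finite \<Rightarrow> complex" and X :: "('w::finite \<times> 'a) op"
  assumes "unit_vec \<phi>"
  shows "trace_on UNIV (ptrace2 (id_tensor (J1 \<phi>) X)) + trace_on UNIV (id_tensor (J0 \<phi>) X) = trace_on UNIV X"
proof -
  have t0: "trace_on UNIV (id_tensor (J0 \<phi>) X) = (\<Sum>w\<in>UNIV. \<Sum>b\<in>UNIV. \<Sum>c\<in>UNIV. X (w,b) (w,c) * Qm \<phi> c b)"
  proof -
    have "trace_on UNIV (id_tensor (J0 \<phi>) X) = (\<Sum>w\<in>UNIV. \<Sum>a\<in>UNIV. \<Sum>b\<in>UNIV. \<Sum>c\<in>UNIV. X (w,b) (w,c) * (Qm \<phi> c a * Qm \<phi> a b))"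
      unfolding trace_on_def UNIV_Times_UNIV[symmetric] sum_times by (simp add: A0_formula mult_ac)
    also have "\<dots> = (\<Sum>w\<in>UNIV. \<Sum>b\<in>UNIV. \<Sum>c\<in>UNIV. \<Sum>a\<in>UNIV. X (w,b) (w,c) * (Qm \<phi> c a * Qm \<phi> a b))"
      by (intro sum.cong refl sum3_swap)
    also have "\<dots> = (\<Sum>w\<in>UNIV. \<Sum>b\<in>UNIV. \<Sum>c\<in>UNIV. X (w,b) (w,c) * Qm \<phi> c b)"
      by (simp add: sum_distrib_left[symmetric] Qm_idem[OF assms])
    finally show ?thesis .
  qed
  have t1: "trace_on UNIV (ptrace2 (id_tensor (J1 \<phi>) X)) = (\<Sum>w\<in>UNIV. \<Sum>b\<in>UNIV. \<Sum>c\<in>UNIV. X (w,b) (w,c) * (\<phi> c * cnj (\<phi> b)))"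
    by (simp add: trace_on_def A1_formula[OF assms] mult_ac)
  have "trace_on UNIV (ptrace2 (id_tensor (J1 \<phi>) X)) + trace_on UNIV (id_tensor (J0 \<phi>) X)
      = (\<Sum>w\<in>UNIV. \<Sum>b\<in>UNIV. \<Sum>c\<in>UNIV. X (w,b) (w,c) * idop c b)"
    unfolding t0 t1 by (simp add: sum.distrib[symmetric] distrib_left[symmetric] Qm_def proj_def)
  also have "\<dots> = (\<Sum>w\<in>UNIV. \<Sum>b\<in>UNIV. X (w,b) (w,b))"
    by (simp add: idop_def mult_if0)
  also have "\<dots> = trace_on UNIV X"
    unfolding trace_on_def UNIV_Times_UNIV[symmetric] sum_times by simp
  finally show ?thesis .
qed

lemma supp_UNIV: "supp_on UNIV A" by (simp add: supp_on_def)

lemma trace_add: "trace_on D (\<lambda>i j. A i j + B i j) = trace_on D A + trace_on D B"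
  by (simp add: trace_on_def sum.distrib)

lemma channelD:
  assumes "is_channel N"
  shows "lin_on UNIV N" "\<And>A. trace_on UNIV (N A) = trace_on UNIV A"
    "\<And>k Z. supp_on (UNIV \<times> {..<k}) Z \<Longrightarrow> psd_on (UNIV \<times> {..<k}) Z \<Longrightarrow> psd_on (UNIV \<times> {..<k}) (tensor_id k N Z)"
  using assms unfolding channel_on_def by (auto simp: supp_UNIV)

lemma Rmap_channel:
  fixes \<phi> :: "'a::finite \<Rightarrow> complex" and \<Gamma> :: "('w::finite \<times> 'a) op \<Rightarrow> ('y::finite) op"
    and \<tau> :: "'w op" and N :: "'w op \<Rightarrow> 'y op"
  assumes u: "unit_vec \<phi>" and G: "is_channel \<Gamma>" and d: "density \<tau>" and N: "is_channel N"
  shows "is_channel (Rmap \<phi> \<Gamma> \<tau> N)"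
proof -
  note GD = channelD[OF G] and ND = channelD[OF N]
  have c1: "trace_on UNIV (N \<tau>) = 1" using ND(2) d by (simp add: density_def)
  have R: "Rmap \<phi> \<Gamma> \<tau> N = (\<lambda>X i j. N (ptrace2 (id_tensor (J1 \<phi>) X)) i j + \<Gamma> (id_tensor (J0 \<phi>) X) i j)"
    by (simp add: Rmap_def c1 fun_eq_iff)
  have lin: "lin_on UNIV (\<lambda>X i j. N (ptrace2 (id_tensor (J1 \<phi>) X)) i j + \<Gamma> (id_tensor (J0 \<phi>) X) i j)"
    unfolding lin_on_def
    by (simp add: A1_lin[OF u] A0_lin lin_addc[OF ND(1)] lin_addc[OF GD(1)] algebra_simps)
  have tr: "trace_on UNIV (N (ptrace2 (id_tensor (J1 \<phi>) X)) ) + trace_on UNIV (\<Gamma> (id_tensor (J0 \<phi>) X)) = trace_on UNIV X" for X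
    by (simp add: ND(2) GD(2) trace_split[OF u])
  have cp: "psd_on (UNIV \<times> {..<k}) (tensor_id k (\<lambda>X i j. N (ptrace2 (id_tensor (J1 \<phi>) X)) i j + \<Gamma> (id_tensor (J0 \<phi>) X) i j) Z)"
    if Z: "psd_on (UNIV \<times> {..<k}) Z" for k Z
    unfolding tensor_add tensor_comp[of k N "\<lambda>X. ptrace2 (id_tensor (J1 \<phi>) X)"] tensor_comp[of k \<Gamma> "id_tensor (J0 \<phi>)"]
    by (rule psd_add, rule ND(3), rule supp_tensor, rule A1_cp[OF Z u], rule GD(3), rule supp_tensor, rule A0_cp[OF Z])
  show ?thesis unfolding R channel_on_def
    using lin tr cp by (simp add: supp_UNIV trace_add)
qed

lemma Jmap_split: "id_tensor (Jmap \<phi>) X = (\<lambda>p q. id_tensor (J1 \<phi>) X p q + id_tensor (J0 \<phi>) X p q)"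
  by (intro ext) (simp add: id_tensor_def Jmap_def split: prod.split)

lemma Rmap_S3:
  fixes \<phi> :: "'a::finite \<Rightarrow> complex" and \<Gamma> :: "('w::finite \<times> 'a) op \<Rightarrow> ('y::finite) op"
    and \<tau> :: "'w op"
  assumes u: "unit_vec \<phi>" and G: "is_channel \<Gamma>" and d: "density \<tau>"
    and fx: "(\<lambda>X. \<Gamma> (id_tensor (Jmap \<phi>) X)) = \<Gamma>"
  shows "Rmap \<phi> \<Gamma> \<tau> (S3 \<phi> \<Gamma>) = \<Gamma>"
proof -
  note GD = channelD[OF G]
  have "trace_on UNIV (kron \<tau> (proj \<phi>)) = (\<Sum>w\<in>UNIV. \<Sum>a\<in>UNIV. \<tau> w w * (\<phi> a * cnj (\<phi> a)))"
    unfolding trace_on_def UNIV_Times_UNIV[symmetric] sum_times by (simp add: kron_def proj_def)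
  also have "\<dots> = trace_on UNIV \<tau> * (\<Sum>a\<in>UNIV. \<phi> a * cnj (\<phi> a))"
    by (simp add: trace_on_def sum_product)
  also have "\<dots> = 1" using d u by (simp add: density_def unit_sum)
  finally have c1: "trace_on UNIV (S3 \<phi> \<Gamma> \<tau>) = 1" by (simp add: S3_def GD(2))
  show ?thesis
  proof (intro ext)
    fix X i j
    have "Rmap \<phi> \<Gamma> \<tau> (S3 \<phi> \<Gamma>) X i j = \<Gamma> (id_tensor (J1 \<phi>) X) i j + 1 * \<Gamma> (id_tensor (J0 \<phi>) X) i j"
      unfolding Rmap_def c1 by (simp add: S3_def J1_kron[OF u])
    also have "\<dots> = \<Gamma> (\<lambda>p q. id_tensor (J1 \<phi>) X p q + 1 * id_tensor (J0 \<phi>) X p q) i j"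
      by (simp only: lin_addc[OF GD(1)])
    also have "\<dots> = \<Gamma> (id_tensor (Jmap \<phi>) X) i j" by (simp add: Jmap_split)
    also have "\<dots> = \<Gamma> X i j" using fun_cong[OF fx, of X] by simp
    finally show "Rmap \<phi> \<Gamma> \<tau> (S3 \<phi> \<Gamma>) X i j = \<Gamma> X i j" .
  qed
qed



lemma sum_option: "(\<Sum>r\<in>(UNIV::('i::finite) option set). f r) = f None + (\<Sum>i\<in>UNIV. f (Some i))"
  by (simp add: UNIV_option_conv sum.reindex)

lemma realization:
  fixes \<phi> :: "'a::finite \<Rightarrow> complex" and \<Gamma> :: "('w::finite \<times> 'a) op \<Rightarrow> ('y::finite) op"
    and \<tau> :: "'w op"
  assumes u: "unit_vec \<phi>" and G: "is_channel \<Gamma>" and d: "density \<tau>"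
  shows "\<exists>m (Epre :: ('w \<times> 'a) op \<Rightarrow> ('w \<times> nat) op) (Epost :: ('y \<times> nat) op \<Rightarrow> 'y op).
        channel_on UNIV (UNIV \<times> {..<m}) Epre \<and>
        channel_on (UNIV \<times> {..<m}) UNIV Epost \<and>
        (\<forall>N. lin_on UNIV N \<longrightarrow> Rmap \<phi> \<Gamma> \<tau> N = (\<lambda>X. Epost (tensor_id m N (Epre X))))"
proof -
  note GD = channelD[OF G]
  define n where "n = card (UNIV :: ('w \<times> 'a) set)"
  obtain enc :: "'w \<times> 'a \<Rightarrow> nat" where bij0: "bij_betw enc UNIV {0..<n}"
    using ex_bij_betw_finite_nat[of "UNIV :: ('w \<times> 'a) set"] unfolding n_def by auto
  have bij: "bij_betw enc UNIV {..<n}" using bij0 by (simp add: atLeast0LessThan)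
  define dec where "dec = the_inv_into UNIV enc"
  have de: "dec (enc p) = p" for p
    unfolding dec_def by (rule the_inv_into_f_f) (use bij in \<open>auto simp: bij_betw_def\<close>)
  have ed: "enc (dec \<alpha>) = \<alpha>" if "\<alpha> < n" for \<alpha>
    unfolding dec_def by (rule f_the_inv_into_f_bij_betw[OF bij]) (use that in auto)
  have encn: "enc p < n" for p using bij by (auto simp: bij_betw_def)
  have reidx: "(\<Sum>\<alpha>\<in>{..<n}. g (dec \<alpha>)) = (\<Sum>p\<in>UNIV. g p)" for g :: "'w \<times> 'a \<Rightarrow> complex"
    using sum.reindex_bij_betw[OF bij, of "\<lambda>\<alpha>. g (dec \<alpha>)"] by (simp add: de)
  have reidx2: "(\<Sum>p\<in>UNIV. g (enc p)) = (\<Sum>\<alpha>\<in>{..<n}. g \<alpha>)" for g :: "nat \<Rightarrow> complex"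
    using sum.reindex_bij_betw[OF bij, of g] by simp
  have "psd_on UNIV \<tau>" using d by (simp add: density_def)
  then obtain ut :: "'w \<Rightarrow> 'w \<Rightarrow> complex" where ut: "\<And>w w'. \<tau> w w' = (\<Sum>r\<in>UNIV. ut r w * cnj (ut r w'))"
    using psd_decomp[of UNIV \<tau>] by auto
  define A1f where "A1f = (\<lambda>X :: ('w \<times> 'a) op. ptrace2 (id_tensor (J1 \<phi>) X))"
  define A0f where "A0f = (\<lambda>X :: ('w \<times> 'a) op. id_tensor (J0 \<phi>) X)"
  define Epre :: "('w \<times> 'a) op \<Rightarrow> ('w \<times> nat) op" where
    "Epre X = (\<lambda>(w,\<alpha>) (w',\<beta>). if \<alpha> = n \<and> \<beta> = n then A1f X w w'
        else if \<alpha> < n \<and> \<beta> < n then \<tau> w w' * A0f X (dec \<alpha>) (dec \<beta>) else 0)" for X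
  define G0 :: "('y \<times> nat) op \<Rightarrow> ('w \<times> 'a) op" where
    "G0 Z = (\<lambda>p p'. \<Sum>y\<in>UNIV. Z (y, enc p) (y, enc p'))" for Z
  define G1 :: "('y \<times> nat) op \<Rightarrow> 'y op" where
    "G1 Z = (\<lambda>y y'. Z (y,n) (y',n))" for Z
  define Epost :: "('y \<times> nat) op \<Rightarrow> 'y op" where
    "Epost Z = (\<lambda>y y'. G1 Z y y' + \<Gamma> (G0 Z) y y')" for Z
  have Epre_app: "Epre X (w,\<alpha>) (w',\<beta>) = (if \<alpha> = n \<and> \<beta> = n then A1f X w w'
        else if \<alpha> < n \<and> \<beta> < n then \<tau> w w' * A0f X (dec \<alpha>) (dec \<beta>) else 0)" for X w \<alpha> w' \<beta>
    by (simp add: Epre_def)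
  have A1lin: "A1f (\<lambda>i j. A i j + c * B i j) = (\<lambda>i j. A1f A i j + c * A1f B i j)" for A B c
    unfolding A1f_def by (rule A1_lin[OF u])
  have A0lin: "A0f (\<lambda>i j. A i j + c * B i j) = (\<lambda>i j. A0f A i j + c * A0f B i j)" for A B c
    unfolding A0f_def by (rule A0_lin)
  have E1: "channel_on UNIV (UNIV \<times> {..<Suc n}) Epre"
    unfolding channel_on_def
  proof (intro conjI allI impI)
    show "lin_on UNIV Epre"
      unfolding lin_on_def
    proof (intro allI impI ext)
      fix A B :: "('w \<times> 'a) op" and c :: complex and p q :: "'w \<times> nat"
      show "Epre (\<lambda>i j. A i j + c * B i j) p q = Epre A p q + c * Epre B p q"
        by (cases p, cases q) (simp add: Epre_app A1lin A0lin algebra_simps)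
    qed
  next
    fix A :: "('w \<times> 'a) op"
    show "supp_on (UNIV \<times> {..<Suc n}) (Epre A)"
      unfolding supp_on_def by (auto simp: Epre_def)
  next
    fix A :: "('w \<times> 'a) op"
    have "trace_on (UNIV \<times> {..<Suc n}) (Epre A) = (\<Sum>w\<in>UNIV. \<Sum>\<alpha>\<in>{..<Suc n}. Epre A (w, \<alpha>) (w, \<alpha>))"
      unfolding trace_on_def sum_times by simp
    also have "\<dots> = (\<Sum>w\<in>UNIV. A1f A w w + (\<Sum>\<alpha>\<in>{..<n}. \<tau> w w * A0f A (dec \<alpha>) (dec \<alpha>)))"
      by (simp add: lessThan_Suc Epre_app)
    also have "\<dots> = trace_on UNIV (A1f A) + trace_on UNIV \<tau> * (\<Sum>\<alpha>\<in>{..<n}. A0f A (dec \<alpha>) (dec \<alpha>))"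
      by (simp add: trace_on_def sum.distrib sum_product)
    also have "\<dots> = trace_on UNIV (A1f A) + trace_on UNIV (A0f A)"
      using d reidx[of "\<lambda>p. A0f A p p"] by (simp add: density_def trace_on_def)
    also have "\<dots> = trace_on UNIV A" unfolding A1f_def A0f_def by (rule trace_split[OF u])
    finally show "supp_on UNIV A \<Longrightarrow> trace_on (UNIV \<times> {..<Suc n}) (Epre A) = trace_on UNIV A" by simp
  next
    fix k and Z :: "(('w \<times> 'a) \<times> nat) op"
    assume Zs: "supp_on (UNIV \<times> {..<k}) Z" and Zp: "psd_on (UNIV \<times> {..<k}) Z"
    show "psd_on ((UNIV \<times> {..<Suc n}) \<times> {..<k}) (tensor_id k Epre Z)"
    proof (rule kraus_cp2[where A = "UNIV::'w set" and B = "UNIV::'a set" and R = "UNIV::'w option set"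
        and g = "\<lambda>r e. case r of None \<Rightarrow> fst e | Some i \<Rightarrow> fst (dec (snd e))"
        and L = "\<lambda>r e b. case r of None \<Rightarrow> (if snd e = n then cnj (\<phi> b) else 0)
                   | Some i \<Rightarrow> (if snd e < n then ut i (fst e) * Qm \<phi> (snd (dec (snd e))) b else 0)"])
      show "psd_on ((UNIV \<times> UNIV) \<times> {..<k}) Z" using Zp by simp
      fix X :: "('w \<times> 'a) op" and e e' :: "'w \<times> nat"
      assume "e \<in> UNIV \<times> {..<Suc n}" "e' \<in> UNIV \<times> {..<Suc n}"
      obtain w \<alpha> w' \<beta> where ee: "e = (w, \<alpha>)" "e' = (w', \<beta>)" by (cases e, cases e')
      show "Epre X e e' = (\<Sum>r\<in>UNIV. \<Sum>b\<in>UNIV. \<Sum>c\<in>UNIV.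
              (case r of None \<Rightarrow> (if snd e = n then cnj (\<phi> b) else 0)
                   | Some i \<Rightarrow> (if snd e < n then ut i (fst e) * Qm \<phi> (snd (dec (snd e))) b else 0)) *
              X (case r of None \<Rightarrow> fst e | Some i \<Rightarrow> fst (dec (snd e)), b)
                (case r of None \<Rightarrow> fst e' | Some i \<Rightarrow> fst (dec (snd e')), c) *
              cnj (case r of None \<Rightarrow> (if snd e' = n then cnj (\<phi> c) else 0)
                   | Some i \<Rightarrow> (if snd e' < n then ut i (fst e') * Qm \<phi> (snd (dec (snd e'))) c else 0)))"
        (is "_ = ?R")
      proof -
        have R: "?R = (\<Sum>b\<in>UNIV. \<Sum>c\<in>UNIV. (if \<alpha> = n then cnj (\<phi> b) else 0) * X (w, b) (w', c) * cnj (if \<beta> = n then cnj (\<phi> c) else 0))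
           + (\<Sum>i\<in>UNIV. \<Sum>b\<in>UNIV. \<Sum>c\<in>UNIV. (if \<alpha> < n then ut i w * Qm \<phi> (snd (dec \<alpha>)) b else 0) *
                X (fst (dec \<alpha>), b) (fst (dec \<beta>), c) * cnj (if \<beta> < n then ut i w' * Qm \<phi> (snd (dec \<beta>)) c else 0))"
          unfolding sum_option ee fst_conv snd_conv by simp
        consider (nn) "\<alpha> = n \<and> \<beta> = n" | (ll) "\<alpha> < n \<and> \<beta> < n" | (oth) "\<not> (\<alpha> = n \<and> \<beta> = n)" "\<not> (\<alpha> < n \<and> \<beta> < n)"
          by blast
        then show ?thesis
        proof cases
          case nn
          then show ?thesis unfolding R unfolding ee by (simp add: Epre_app A1f_def A1_formula[OF u])
        next
          case ll
          have a0: "A0f X (dec \<alpha>) (dec \<beta>) = (\<Sum>b\<in>UNIV. \<Sum>c\<in>UNIV. Qm \<phi> (snd (dec \<alpha>)) b * X (fst (dec \<alpha>), b) (fst (dec \<beta>), c) * Qm \<phi> c (snd (dec \<beta>)))"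
            using A0_formula[of \<phi> X "fst (dec \<alpha>)" "snd (dec \<alpha>)" "fst (dec \<beta>)" "snd (dec \<beta>)"]
            by (simp add: A0f_def)
          have "(\<Sum>i\<in>UNIV. \<Sum>b\<in>UNIV. \<Sum>c\<in>UNIV. (if \<alpha> < n then ut i w * Qm \<phi> (snd (dec \<alpha>)) b else 0) *
                X (fst (dec \<alpha>), b) (fst (dec \<beta>), c) * cnj (if \<beta> < n then ut i w' * Qm \<phi> (snd (dec \<beta>)) c else 0))
             = (\<Sum>i\<in>UNIV. ut i w * cnj (ut i w') * A0f X (dec \<alpha>) (dec \<beta>))"
            using ll unfolding a0 by (simp add: Qm_herm sum_distrib_left mult_ac)
          also have "\<dots> = \<tau> w w' * A0f X (dec \<alpha>) (dec \<beta>)"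
            by (simp add: ut sum_distrib_right)
          finally show ?thesis unfolding R unfolding ee using ll by (simp add: Epre_app)
        next
          case oth
          then show ?thesis unfolding R unfolding ee by (auto simp: Epre_app)
        qed
      qed
    qed auto
  qed
  have G0lin: "G0 (\<lambda>i j. A i j + c * B i j) = (\<lambda>i j. G0 A i j + c * G0 B i j)" for A B c
    by (intro ext) (simp add: G0_def sum.distrib sum_distrib_left)
  have Epost_eq: "Epost = (\<lambda>Z i j. G1 Z i j + \<Gamma> (G0 Z) i j)" by (intro ext) (simp add: Epost_def)
  have E2: "channel_on (UNIV \<times> {..<Suc n}) UNIV Epost"
    unfolding channel_on_def
  proof (intro conjI allI impI)
    show "lin_on (UNIV \<times> {..<Suc n}) Epost"
      unfolding lin_on_def Epost_eq by (simp add: G0lin lin_addc[OF GD(1)] G1_def algebra_simps)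
  next
    fix A :: "('y \<times> nat) op"
    show "supp_on UNIV (Epost A)" by (rule supp_UNIV)
  next
    fix A :: "('y \<times> nat) op"
    have "trace_on UNIV (G0 A) = (\<Sum>p\<in>UNIV. \<Sum>y\<in>UNIV. A (y, enc p) (y, enc p))" by (simp add: trace_on_def G0_def)
    also have "\<dots> = (\<Sum>y\<in>UNIV. \<Sum>p\<in>UNIV. A (y, enc p) (y, enc p))" by (rule sum.swap)
    also have "\<dots> = (\<Sum>y\<in>UNIV. \<Sum>\<alpha>\<in>{..<n}. A (y, \<alpha>) (y, \<alpha>))" by (rule sum.cong[OF refl], rule reidx2)
    finally have t0: "trace_on UNIV (G0 A) = (\<Sum>y\<in>UNIV. \<Sum>\<alpha>\<in>{..<n}. A (y, \<alpha>) (y, \<alpha>))" .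
    have "trace_on (UNIV \<times> {..<Suc n}) A = (\<Sum>y\<in>UNIV. \<Sum>\<alpha>\<in>{..<Suc n}. A (y, \<alpha>) (y, \<alpha>))"
      unfolding trace_on_def sum_times by simp
    also have "\<dots> = (\<Sum>y\<in>UNIV. A (y,n) (y,n) + (\<Sum>\<alpha>\<in>{..<n}. A (y, \<alpha>) (y, \<alpha>)))"
      by (simp add: lessThan_Suc)
    finally show "supp_on (UNIV \<times> {..<Suc n}) A \<Longrightarrow> trace_on UNIV (Epost A) = trace_on (UNIV \<times> {..<Suc n}) A"
      unfolding Epost_eq trace_add GD(2) t0 by (simp add: trace_on_def G1_def sum.distrib)
  next
    fix k and Z :: "(('y \<times> nat) \<times> nat) op"
    assume Zs: "supp_on ((UNIV \<times> {..<Suc n}) \<times> {..<k}) Z" and Zp: "psd_on ((UNIV \<times> {..<Suc n}) \<times> {..<k}) Z"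
    have c1: "psd_on (UNIV \<times> {..<k}) (tensor_id k G1 Z)"
    proof (rule kraus_cp2[where A = "UNIV::'y set" and B = "{..<Suc n}" and R = "UNIV::unit set"
        and g = "\<lambda>r e. e" and L = "\<lambda>r e \<alpha>. if \<alpha> = n then 1 else 0"])
      fix X :: "('y \<times> nat) op" and e e' :: 'y
      show "G1 X e e' = (\<Sum>r\<in>(UNIV::unit set). \<Sum>b\<in>{..<Suc n}. \<Sum>c\<in>{..<Suc n}. (if b = n then 1 else 0) * X (e, b) (e', c) * cnj (if c = n then 1 else 0))"
        by (simp add: G1_def if0_mult mult_if0 cnj_if0 sum_if0)
    qed (use Zp in auto)
    have c0: "psd_on (UNIV \<times> {..<k}) (tensor_id k G0 Z)"
    proof (rule kraus_cp2[where A = "UNIV::'y set" and B = "{..<Suc n}" and R = "UNIV::'y set"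
        and g = "\<lambda>r e. r" and L = "\<lambda>r e \<alpha>. if \<alpha> = enc e then 1 else 0"])
      fix X :: "('y \<times> nat) op" and e e' :: "'w \<times> 'a"
      show "G0 X e e' = (\<Sum>r\<in>UNIV. \<Sum>b\<in>{..<Suc n}. \<Sum>c\<in>{..<Suc n}. (if b = enc e then 1 else 0) * X (r, b) (r, c) * cnj (if c = enc e' then 1 else 0))"
        using encn[of e] encn[of e'] by (simp add: G0_def if0_mult mult_if0 cnj_if0 sum_if0)
    qed (use Zp in auto)
    show "psd_on (UNIV \<times> {..<k}) (tensor_id k Epost Z)"
      unfolding Epost_eq tensor_add tensor_comp[of k \<Gamma> G0]
      by (rule psd_add[OF c1], rule GD(3)[OF supp_tensor c0])
  qed
  have encne: "enc p \<noteq> n" for p using encn[of p] by simp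
  have E3: "Rmap \<phi> \<Gamma> \<tau> N = (\<lambda>X. Epost (tensor_id (Suc n) N (Epre X)))" if N: "lin_on UNIV N" for N
  proof (intro ext)
    fix X y y'
    have t1: "(\<lambda>w w'. Epre X (w,n) (w',n)) = A1f X" by (intro ext) (simp add: Epre_app)
    have t0: "(\<lambda>w w'. Epre X (w, enc p) (w', enc p')) = (\<lambda>w w'. A0f X p p' * \<tau> w w')" for p p'
      by (intro ext) (simp add: Epre_app encn encne de mult.commute)
    have g1: "G1 (tensor_id (Suc n) N (Epre X)) y y' = N (A1f X) y y'"
      by (simp add: G1_def tensor_id_def t1)
    have g0: "G0 (tensor_id (Suc n) N (Epre X)) = (\<lambda>p p'. trace_on UNIV (N \<tau>) * A0f X p p')"
    proof (intro ext)
      fix p p'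
      have "G0 (tensor_id (Suc n) N (Epre X)) p p' = (\<Sum>y\<in>UNIV. N (\<lambda>w w'. A0f X p p' * \<tau> w w') y y)"
        using encn[of p] encn[of p'] by (simp add: G0_def tensor_id_def t0)
      also have "\<dots> = (\<Sum>y\<in>UNIV. A0f X p p' * N \<tau> y y)" by (simp add: lin_scale[OF N])
      also have "\<dots> = trace_on UNIV (N \<tau>) * A0f X p p'" by (simp add: trace_on_def sum_distrib_left mult.commute)
      finally show "G0 (tensor_id (Suc n) N (Epre X)) p p' = trace_on UNIV (N \<tau>) * A0f X p p'" .
    qed
    show "Rmap \<phi> \<Gamma> \<tau> N X y y' = Epost (tensor_id (Suc n) N (Epre X)) y y'"
      unfolding Epost_def g1 g0 lin_scale[OF GD(1)] by (simp add: Rmap_def A1f_def A0f_def)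
  qed
  show ?thesis using E1 E2 E3 by blast
qed


theorem mainTheorem2:
  fixes \<phi> :: "'a::finite \<Rightarrow> complex"
    and \<Gamma> :: "('w::finite \<times> 'a) op \<Rightarrow> ('y::finite) op"
    and \<tau> :: "'w op"
  assumes "unit_vec \<phi>"
    and "is_channel \<Gamma>"
    and "density \<tau>"
  shows "is_superchannel (Rmap \<phi> \<Gamma> \<tau>)
         \<and> ((\<lambda>X. \<Gamma> (id_tensor (Jmap \<phi>) X)) = \<Gamma> \<longrightarrow> Rmap \<phi> \<Gamma> \<tau> (S3 \<phi> \<Gamma>) = \<Gamma>)"
proof (intro conjI impI)
  show "is_superchannel (Rmap \<phi> \<Gamma> \<tau>)"
    unfolding is_superchannel_def
    using Rmap_channel[OF assms] realization[OF assms] by blast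
next
  assume "(\<lambda>X. \<Gamma> (id_tensor (Jmap \<phi>) X)) = \<Gamma>"
  then show "Rmap \<phi> \<Gamma> \<tau> (S3 \<phi> \<Gamma>) = \<Gamma>" by (rule Rmap_S3[OF assms])
qed

end
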